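(* Let $F_j$ denote the ordinary Fibonacci numbers ($F_1=F_2=1$, $F_{j+1}=F_j+F_{j-1}$). For integers $m\ge1$ and $N\ge1$ let $$S_m(N)=\sum_{\substack{j_1,\dots,j_m\ge1\\ j_1+\cdots+j_m=N}}F_{j_1}F_{j_2}\cdots F_{j_m}.$$ Then for all integers $m\ge1$, $n\ge0$, $$S_m(n+m)=(-i)^nC_n^{m}(i/2)=\frac{(2m)_n}{2^n}\sum_{r=0}^{\lfloor n/2\rfloor}\frac{(5/4)^r}{r!\,(m+1/2)_r\,(n-2r)!}.$$ *)

theory Defs
  imports Complex_Main "HOL-Number_Theory.Fib"
begin

definition fib_conv_sum :: "nat \<Rightarrow> nat \<Rightarrow> nat" where
  "fib_conv_sum m N =
     (\<Sum>js\<in>{js :: nat list. length js = m \<and> (\<forall>j\<in>set js. 1 \<le> j) \<and> sum_list js = N}.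
        prod_list (map fib js))"

definition gegenbauer :: "nat \<Rightarrow> complex \<Rightarrow> complex \<Rightarrow> complex" where
  "gegenbauer n lam x =
     (\<Sum>k=0..n div 2. (-1)^k * pochhammer lam (n - k)
        / (fact k * fact (n - 2*k)) * (2*x)^(n - 2*k))"

end

theory Submission
  imports Defs "HOL-Computational_Algebra.Formal_Power_Series"
begin

unbundle fps_syntax



definition fcsS :: "nat \<Rightarrow> nat \<Rightarrow> nat list set" where
  "fcsS m N = {js :: nat list. length js = m \<and> (\<forall>j\<in>set js. 1 \<le> j) \<and> sum_list js = N}"

lemma fcsS_finite: "finite (fcsS m N)"
proof -
  have "fcsS m N \<subseteq> {xs. set xs \<subseteq> {0..N} \<and> length xs = m}"
    unfolding fcsS_def using member_le_sum_list[where 'a=nat] by fastforce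
  moreover have "finite {xs. set xs \<subseteq> {0..N::nat} \<and> length xs = m}"
    by (rule finite_lists_length_eq) simp
  ultimately show ?thesis by (rule finite_subset)
qed

lemma fcsS_0: "fcsS 0 N = (if N = 0 then {[]} else {})"
  unfolding fcsS_def by auto

lemma fcsS_Suc: "fcsS (Suc m) N = (\<lambda>(j,js). j # js) ` (SIGMA j:{1..N}. fcsS m (N - j))"
proof (rule set_eqI, rule iffI)
  fix xs assume "xs \<in> fcsS (Suc m) N"
  then obtain j js where xs: "xs = j # js" and "length js = m" "1 \<le> j" "\<forall>j\<in>set js. 1 \<le> j"
     "j + sum_list js = N"
    unfolding fcsS_def by (cases xs) auto
  then show "xs \<in> (\<lambda>(j,js). j # js) ` (SIGMA j:{1..N}. fcsS m (N - j))"
    unfolding fcsS_def by (auto intro!: image_eqI[where x="(j,js)"])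
next
  fix xs assume "xs \<in> (\<lambda>(j,js). j # js) ` (SIGMA j:{1..N}. fcsS m (N - j))"
  then show "xs \<in> fcsS (Suc m) N" unfolding fcsS_def by auto
qed

lemma fcs_0: "fib_conv_sum 0 N = (if N = 0 then 1 else 0)"
  unfolding fib_conv_sum_def fcsS_def[symmetric] fcsS_0 by simp

lemma fcs_Suc: "fib_conv_sum (Suc m) N = (\<Sum>i=0..N. fib i * fib_conv_sum m (N - i))"
proof -
  have inj: "inj_on (\<lambda>(j,js). j # (js::nat list)) X" for X by (auto simp: inj_on_def)
  have "fib_conv_sum (Suc m) N = (\<Sum>p\<in>(SIGMA j:{1..N}. fcsS m (N - j)). prod_list (map fib (fst p # snd p)))"
    unfolding fib_conv_sum_def fcsS_def[symmetric] fcsS_Suc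
    by (subst sum.reindex[OF inj]) (simp add: case_prod_beta)
  also have "\<dots> = (\<Sum>j=1..N. \<Sum>js\<in>fcsS m (N - j). fib j * prod_list (map fib js))"
    by (subst sum.Sigma) (auto simp: fcsS_finite split_def)
  also have "\<dots> = (\<Sum>j=1..N. fib j * fib_conv_sum m (N - j))"
    by (simp add: fib_conv_sum_def fcsS_def sum_distrib_left)
  also have "\<dots> = (\<Sum>i=0..N. fib i * fib_conv_sum m (N - i))"
    by (simp add: sum.atLeast_Suc_atMost)
  finally show ?thesis .
qed

definition Fibs :: "complex fps" where "Fibs = Abs_fps (\<lambda>j. of_nat (fib j))"

lemma fcs_fps: "of_nat (fib_conv_sum m N) = (Fibs ^ m) $ N"
proof (induction m arbitrary: N)
  case 0 then show ?case by (simp add: fcs_0)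
next
  case (Suc m)
  show ?case by (simp add: fcs_Suc fps_mult_nth Suc.IH Fibs_def)
qed

lemma Fibs_P: "Fibs * (1 - fps_X - fps_X^2) = fps_X"
proof (rule fps_ext)
  fix n
  have "Fibs * (1 - fps_X - fps_X^2) = Fibs - fps_X * Fibs - fps_X * (fps_X * Fibs)"
    by (simp add: algebra_simps power2_eq_square)
  then show "(Fibs * (1 - fps_X - fps_X^2)) $ n = fps_X $ n"
    by (cases n rule: fib.cases) (auto simp: Fibs_def)
qed




definition PP :: "complex fps" where "PP = 1 - fps_X - fps_X^2"

lemma PP0[simp]: "PP $ 0 = 1" by (simp add: PP_def)

lemma Fibs_coeff: "(Fibs ^ m) $ (n + m) = inverse (PP ^ m) $ n"
proof -
  have "Fibs ^ m * PP ^ m = fps_X ^ m"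
    using Fibs_P by (simp add: PP_def power_mult_distrib[symmetric])
  have nz: "(PP ^ m) $ 0 \<noteq> 0" by (simp add: fps_nth_power_0)
  have "Fibs ^ m = Fibs ^ m * (PP ^ m * inverse (PP ^ m))"
    using inverse_mult_eq_1'[OF nz] by simp
  also have "\<dots> = fps_X ^ m * inverse (PP ^ m)"
    by (simp add: mult.assoc[symmetric] \<open>Fibs ^ m * PP ^ m = fps_X ^ m\<close>)
  finally show ?thesis by (simp add: fps_X_power_mult_nth)
qed

lemma inv_binom:
  fixes b :: "complex fps"
  assumes b0: "b $ 0 = 0"
  shows "inverse ((1 + b) ^ m) = fps_binomial (- of_nat m) oo b"
proof (rule fps_inverse_unique)
  have "(1 + b) ^ m = fps_binomial (of_nat m) oo b"
    by (simp add: fps_binomial_of_nat fps_compose_power[OF b0, symmetric]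
        fps_compose_add_distrib b0)
  then have "(1 + b) ^ m * (fps_binomial (- of_nat m) oo b)
      = (fps_binomial (of_nat m) * fps_binomial (- of_nat m)) oo b"
    by (simp add: fps_compose_mult_distrib[OF b0])
  also have "\<dots> = 1" by (simp add: fps_binomial_add_mult[symmetric])
  finally show "(1 + b) ^ m * (fps_binomial (- of_nat m) oo b) = 1" .
qed

lemma compose_mult_nth:
  fixes a b c :: "complex fps"
  assumes b0: "b $ 0 = 0"
  shows "((a oo b) * c) $ n = (\<Sum>i=0..n. a $ i * (b ^ i * c) $ n)"
proof -
  have ext: "(a oo b) $ j = (\<Sum>i=0..n. a $ i * (b ^ i) $ j)" if "j \<le> n" for j
  proof -
    have "(a oo b) $ j = (\<Sum>i=0..j. a $ i * (b ^ i) $ j)" by (simp add: fps_compose_nth)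
    also have "\<dots> = (\<Sum>i=0..n. a $ i * (b ^ i) $ j)"
      by (rule sum.mono_neutral_left) (use that startsby_zero_power_prefix[OF b0] in auto)
    finally show ?thesis .
  qed
  have "((a oo b) * c) $ n = (\<Sum>j=0..n. (\<Sum>i=0..n. a $ i * (b ^ i) $ j) * c $ (n - j))"
    by (simp add: fps_mult_nth ext)
  also have "\<dots> = (\<Sum>j=0..n. \<Sum>i=0..n. a $ i * ((b ^ i) $ j * c $ (n - j)))"
    by (simp add: sum_distrib_right mult.assoc)
  also have "\<dots> = (\<Sum>i=0..n. \<Sum>j=0..n. a $ i * ((b ^ i) $ j * c $ (n - j)))"
    by (rule sum.swap)
  also have "\<dots> = (\<Sum>i=0..n. a $ i * (b ^ i * c) $ n)"
    by (simp only: fps_mult_nth sum_distrib_left)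
  finally show ?thesis .
qed




lemma binom_nth: "((1 + fps_X :: complex fps) ^ i) $ j = of_nat (i choose j)"
  by (simp add: fps_binomial_of_nat[symmetric] binomial_gbinomial)

lemma bi: "(- (fps_X * (1 + fps_X)) :: complex fps) ^ i = fps_const ((-1)^i) * (fps_X ^ i * (1 + fps_X) ^ i)"
proof -
  have e: "(- (fps_X * (1 + fps_X)) :: complex fps) = fps_const (-1) * (fps_X * (1 + fps_X))" by (simp add: fps_eq_iff)
  show ?thesis unfolding e by (simp only: power_mult_distrib fps_const_power[symmetric])
qed

lemma A_coeff: "inverse (PP ^ m) $ n
   = (\<Sum>i=0..n. pochhammer (of_nat m) i / fact i * of_nat (i choose (n - i)))"
proof -
  define b :: "complex fps" where "b = - (fps_X * (1 + fps_X))"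
  have b0: "b $ 0 = 0" by (simp add: b_def)
  have P: "PP = 1 + b" by (simp add: PP_def b_def algebra_simps power2_eq_square)
  have "inverse (PP ^ m) $ n = (\<Sum>i=0..n. (- of_nat m gchoose i) * (b ^ i $ n))"
    by (simp only: P inv_binom[OF b0] fps_compose_nth fps_binomial_nth)
  also have "\<dots> = (\<Sum>i=0..n. pochhammer (of_nat m) i / fact i * of_nat (i choose (n - i)))"
  proof (rule sum.cong[OF refl])
    fix i assume "i \<in> {0..n}"
    then have "\<not> n < i" by simp
    have g: "(- of_nat m gchoose i) = (-1)^i * pochhammer (of_nat m) i / fact i"
      by (simp add: gbinomial_pochhammer)
    have h: "b ^ i $ n = (-1)^i * of_nat (i choose (n - i))"
      unfolding b_def bi using \<open>\<not> n < i\<close>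
      by (simp only: fps_mult_left_const_nth fps_X_power_mult_nth binom_nth if_False)
    show "(- of_nat m gchoose i) * (b ^ i $ n) = pochhammer (of_nat m) i / fact i * of_nat (i choose (n - i))"
      unfolding g h by (simp add: field_simps flip: power_mult_distrib)
  qed
  finally show ?thesis .
qed



definition DD :: "complex fps" where "DD = 1 - fps_const (1/2) * fps_X"

lemma DD0[simp]: "DD $ 0 = 1" by (simp add: DD_def)

lemma Ed_nth: "inverse (DD ^ a) $ j = (-1/2)^j * (- of_nat a gchoose j)"
proof -
  have "- fps_const (1/2) * fps_X = fps_const (-1/2 :: complex) * fps_X" by simp
  then show ?thesis unfolding DD_def one_minus_fps_X_const_neg_power
    by (simp only: fps_nth_compose_linear fps_binomial_nth)
qed

lemma DD2: "DD^2 - fps_const (5/4) * fps_X^2 = PP"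
proof (rule fps_ext)
  fix n
  have h1: "2 * fps_const (1/2::complex) = 1" by (simp add: fps_eq_iff numeral_fps_const)
  have h2: "fps_const (5/4::complex) = 1 + fps_const (1/4)" by (simp add: fps_eq_iff)
  have e: "DD^2 - fps_const (5/4) * fps_X^2 = 1 - fps_X * fps_const 1 - fps_X * (fps_X * fps_const 1)"
    unfolding DD_def power2_eq_square
    by (simp add: algebra_simps fps_const_mult[symmetric] h1 h2 flip: fps_const_neg)
  show "(DD^2 - fps_const (5/4) * fps_X^2) $ n = PP $ n"
    unfolding e by (simp add: PP_def power2_eq_square)
qed

lemma R_coeff: "inverse (PP ^ m) $ n = (\<Sum>i=0..n. (- of_nat m gchoose i) *
     ((-5/4)^i * (if n < 2*i then 0 else (-1/2)^(n-2*i) * (- of_nat (2*m+2*i) gchoose (n-2*i)))))"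
proof -
  define V where "V = fps_const (5/4) * fps_X^2 * inverse (DD^2)"
  have V0: "(-V) $ 0 = 0" by (simp add: V_def)
  have inv2: "DD^2 * inverse (DD^2) = 1" by (rule inverse_mult_eq_1') (simp add: fps_nth_power_0)
  have "DD^2 * (1 + (-V)) = DD^2 - fps_const (5/4) * fps_X^2 * (DD^2 * inverse (DD^2))"
    by (simp add: V_def algebra_simps)
  then have P: "PP = DD^2 * (1 + (-V))" by (simp add: inv2 DD2)
  have "inverse (PP ^ m) = inverse (DD ^ (2*m)) * inverse ((1 + (-V)) ^ m)"
    by (simp add: P power_mult_distrib power_mult fps_inverse_mult)
  also have "\<dots> = (fps_binomial (- of_nat m) oo (-V)) * inverse (DD ^ (2*m))"
    by (simp only: inv_binom[OF V0] mult.commute)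
  finally have "inverse (PP ^ m) $ n = (\<Sum>i=0..n. (- of_nat m gchoose i) * ((-V) ^ i * inverse (DD ^ (2*m))) $ n)"
    by (simp add: compose_mult_nth[OF V0])
  also have "\<dots> = (\<Sum>i=0..n. (- of_nat m gchoose i) *
     ((-5/4)^i * (if n < 2*i then 0 else (-1/2)^(n-2*i) * (- of_nat (2*m+2*i) gchoose (n-2*i)))))"
  proof (rule sum.cong[OF refl])
    fix i
    have e1: "-V = fps_const (-5/4) * (fps_X^2 * inverse (DD^2))"
      by (simp add: V_def mult.assoc del: fps_const_neg add: fps_const_neg[symmetric])
    have e2: "inverse (DD^2) ^ i * inverse (DD ^ (2*m)) = inverse (DD ^ (2*m+2*i))"
    proof -
      have "(DD^2)^i * DD^(2*m) = DD ^ (2*m+2*i)"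
        by (simp add: power_mult[symmetric] power_add[symmetric] add.commute)
      moreover have "inverse (DD^2) ^ i = inverse ((DD^2)^i)" by (rule fps_inverse_power[symmetric])
      moreover have "inverse ((DD^2)^i * DD^(2*m)) = inverse ((DD^2)^i) * inverse (DD^(2*m))"
        by (rule fps_inverse_mult)
      ultimately show ?thesis by simp
    qed
    have "(-V) ^ i * inverse (DD ^ (2*m)) = fps_const ((-5/4)^i) * (fps_X^(2*i) * inverse (DD ^ (2*m+2*i)))"
      unfolding e1 power_mult_distrib fps_const_power
      by (simp only: mult.assoc e2 power_mult[of "fps_X::complex fps"])
    then show "(- of_nat m gchoose i) * ((-V) ^ i * inverse (DD ^ (2*m))) $ n = (- of_nat m gchoose i) *
     ((-5/4)^i * (if n < 2*i then 0 else (-1/2)^(n-2*i) * (- of_nat (2*m+2*i) gchoose (n-2*i))))"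
      by (simp only: fps_mult_left_const_nth fps_X_power_mult_nth Ed_nth)
  qed
  finally show ?thesis .
qed



lemma A_sum: "(\<Sum>i=0..n. pochhammer (of_nat m :: complex) i / fact i * of_nat (i choose (n - i)))
  = (\<Sum>k=0..n div 2. pochhammer (of_nat m) (n - k) / (fact k * fact (n - 2*k)))"
proof -
  let ?f = "\<lambda>i. pochhammer (of_nat m :: complex) i / fact i * of_nat (i choose (n - i))"
  have "(\<Sum>i=0..n. ?f i) = (\<Sum>k=0..n. ?f (n - k))"
    by (subst sum.atLeastAtMost_rev) simp
  also have "\<dots> = (\<Sum>k=0..n div 2. ?f (n - k))"
  proof (rule sum.mono_neutral_right)
    show "\<forall>k\<in>{0..n} - {0..n div 2}. ?f (n - k) = 0"
    proof
      fix k assume "k \<in> {0..n} - {0..n div 2}"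
      then have "n - k < n - (n - k)" by auto
      then show "?f (n - k) = 0" by (simp add: binomial_eq_0)
    qed
  qed auto
  also have "\<dots> = (\<Sum>k=0..n div 2. pochhammer (of_nat m) (n - k) / (fact k * fact (n - 2*k)))"
  proof (rule sum.cong[OF refl])
    fix k assume "k \<in> {0..n div 2}"
    then have k: "k \<le> n - k" "n - (n - k) = k" "n - k - k = n - 2*k" by auto
    show "?f (n - k) = pochhammer (of_nat m) (n - k) / (fact k * fact (n - 2*k))"
      using k by (simp add: binomial_fact[OF k(1)] field_simps)
  qed
  finally show ?thesis .
qed

lemma geg_simp: "(-\<i>)^n * gegenbauer n (of_nat m) (\<i>/2)
   = (\<Sum>k=0..n div 2. pochhammer (of_nat m) (n - k) / (fact k * fact (n - 2*k)))"
  unfolding gegenbauer_def sum_distrib_left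
proof (rule sum.cong[OF refl])
  fix k assume "k \<in> {0..n div 2}"
  then have n: "n = (n - 2*k) + 2*k" by auto
  have "(-\<i>)^n * ((-1)^k * (2 * (\<i>/2))^(n - 2*k)) = 1"
  proof -
    have "(-\<i>)^n = (-\<i>)^(n - 2*k) * (-1)^k"
      by (subst n) (simp add: power_add power_mult)
    moreover have "(-\<i>)^(n - 2*k) * \<i>^(n - 2*k) = 1"
      by (simp flip: power_mult_distrib)
    moreover have "((-1::complex)^k * (-1)^k) = 1"
      by (simp flip: power_add)
    ultimately show ?thesis by (simp add: algebra_simps)
  qed
  then show "(-\<i>)^n * ((-1)^k * pochhammer (of_nat m) (n - k) / (fact k * fact (n - 2*k)) * (2 * (\<i>/2))^(n - 2*k))
      = pochhammer (of_nat m) (n - k) / (fact k * fact (n - 2*k))"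
    by (simp add: field_simps)
qed



lemma poch_half_nz: "pochhammer (of_nat m + 1/2 :: complex) r \<noteq> 0"
proof
  assume "pochhammer (of_nat m + 1/2 :: complex) r = 0"
  then obtain k where "(of_nat m + 1/2 :: complex) = - of_nat k" by (auto simp: pochhammer_eq_0_iff)
  then have "Re (of_nat m + 1/2 :: complex) = Re (- of_nat k)" by simp
  then have "real m + 1/2 = - real k" by simp
  then show False by linarith
qed

lemma R_sum: "(\<Sum>i=0..n. (- of_nat m gchoose i) *
     ((-5/4)^i * (if n < 2*i then 0 else (-1/2)^(n-2*i) * (- of_nat (2*m+2*i) gchoose (n-2*i)))))
   = pochhammer (2 * of_nat m) n / 2^n *
           (\<Sum>r=0..n div 2. (5/4)^r / (fact r * pochhammer (of_nat m + 1/2) r * fact (n - 2*r)) :: complex)"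
proof -
  have "(\<Sum>i=0..n. (- of_nat m gchoose i) *
     ((-5/4)^i * (if n < 2*i then 0 else (-1/2)^(n-2*i) * (- of_nat (2*m+2*i) gchoose (n-2*i)))))
     = (\<Sum>i=0..n div 2. (- of_nat m gchoose i) *
     ((-5/4)^i * (if n < 2*i then 0 else (-1/2)^(n-2*i) * (- of_nat (2*m+2*i) gchoose (n-2*i)) :: complex)))"
    by (rule sum.mono_neutral_right) auto
  also have "\<dots> = (\<Sum>r=0..n div 2. pochhammer (2 * of_nat m) n / 2^n *
        ((5/4)^r / (fact r * pochhammer (of_nat m + 1/2) r * fact (n - 2*r))))"
  proof (rule sum.cong[OF refl])
    fix i assume "i \<in> {0..n div 2}"
    then have ni: "\<not> n < 2*i" by auto
    define j where "j = n - 2*i"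
    have nj: "n = 2*i + j" using ni j_def by auto
    define p where "p = pochhammer (of_nat m :: complex) i"
    define q where "q = pochhammer (of_nat m + 1/2 :: complex) i"
    define s where "s = pochhammer (of_nat (2*m+2*i) :: complex) j"
    have g1: "(- of_nat m gchoose i) = (-1)^i * p / fact i"
      by (simp add: gbinomial_pochhammer p_def)
    have g2: "(- of_nat (2*m+2*i) gchoose j) = (-1)^j * s / (fact j :: complex)"
      by (simp only: gbinomial_pochhammer minus_minus s_def)
    have P: "pochhammer (2 * of_nat m :: complex) n = 2^(2*i) * p * q * s"
    proof -
      have "pochhammer (2 * of_nat m :: complex) n = pochhammer (2 * of_nat m) (2*i) * pochhammer (2 * of_nat m + of_nat (2*i)) j"
        by (simp only: nj pochhammer_product')
      moreover have "(2 * of_nat m + of_nat (2*i) :: complex) = of_nat (2*m+2*i)" by simp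
      ultimately show ?thesis unfolding pochhammer_double p_def q_def s_def by simp
    qed
    have qnz: "q \<noteq> 0" using poch_half_nz q_def by simp
    have sg: "(-1::complex)^i * (-5/4)^i = (5/4)^i" by (simp flip: power_mult_distrib)
    have sg2: "(-1/2::complex)^j * (-1)^j = (1/2)^j" by (simp flip: power_mult_distrib)
    have two: "(2::complex)^n = 2^(2*i) * 2^j" by (simp add: nj power_add)
    have L: "(- of_nat m gchoose i) *
     ((-5/4)^i * (if n < 2*i then 0 else (-1/2)^(n-2*i) * (- of_nat (2*m+2*i) gchoose (n-2*i))))
      = (-1)^i * p / fact i * ((-5/4)^i * ((-1/2)^j * ((-1)^j * s / fact j)))"
      by (simp only: g1 g2 j_def[symmetric] if_not_P[OF ni])
    have R: "pochhammer (2 * of_nat m) n / 2^n *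
        ((5/4)^i / (fact i * pochhammer (of_nat m + 1/2) i * fact (n - 2*i)))
       = 2^(2*i) * p * q * s / (2^(2*i) * 2^j) * ((5/4)^i / (fact i * q * fact j) :: complex)"
      by (simp only: P two j_def[symmetric] q_def[symmetric])
    have "(-1)^i * p / fact i * ((-5/4)^i * ((-1/2)^j * ((-1)^j * s / fact j)))
       = ((-1::complex)^i * (-5/4)^i) * ((-1/2)^j * (-1)^j) * p * s / (fact i * fact j)"
      by (simp add: field_simps)
    also have "\<dots> = 2^(2*i) * p * q * s / (2^(2*i) * 2^j) * ((5/4)^i / (fact i * q * fact j) :: complex)"
      unfolding sg sg2 using qnz by (simp add: field_simps power_divide)
    finally show "(- of_nat m gchoose i) *
     ((-5/4)^i * (if n < 2*i then 0 else (-1/2)^(n-2*i) * (- of_nat (2*m+2*i) gchoose (n-2*i)))) =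
         pochhammer (2 * of_nat m) n / 2^n *
        ((5/4)^i / (fact i * pochhammer (of_nat m + 1/2) i * fact (n - 2*i)) :: complex)"
      unfolding L R .
  qed
  also have "\<dots> = pochhammer (2 * of_nat m) n / 2^n *
           (\<Sum>r=0..n div 2. (5/4)^r / (fact r * pochhammer (of_nat m + 1/2) r * fact (n - 2*r)))"
    by (simp add: sum_distrib_left)
  finally show ?thesis .
qed


theorem mainTheorem7:
  fixes m n :: nat
  assumes "m \<ge> 1"
  shows "of_nat (fib_conv_sum m (n + m)) = (-\<i>)^n * gegenbauer n (of_nat m) (\<i>/2)
       \<and> (-\<i>)^n * gegenbauer n (of_nat m) (\<i>/2)
         = pochhammer (2 * of_nat m) n / 2^n *
           (\<Sum>r=0..n div 2. (5/4)^r / (fact r * pochhammer (of_nat m + 1/2) r * fact (n - 2*r)))"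
proof
  show "of_nat (fib_conv_sum m (n + m)) = (-\<i>)^n * gegenbauer n (of_nat m) (\<i>/2)"
    by (simp only: fcs_fps Fibs_coeff A_coeff A_sum geg_simp)
  show "(-\<i>)^n * gegenbauer n (of_nat m) (\<i>/2)
         = pochhammer (2 * of_nat m) n / 2^n *
           (\<Sum>r=0..n div 2. (5/4)^r / (fact r * pochhammer (of_nat m + 1/2) r * fact (n - 2*r)))"
    by (simp only: geg_simp A_sum[symmetric] A_coeff[symmetric] R_coeff R_sum)
qed

end
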